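(* Every forest (in particular every tree) of order $n$ has at most $2^{n/2}$ independent dominating sets. Moreover, there are infinitely many trees $T$ such that, with $n$ the order of $T$, $T$ has at least $\frac{1}{2}2^{n/2}$ independent dominating sets.
   Context: An independent dominating set of $G=(V,E)$ is a set $D\subseteq V$ with no edge inside $D$ such that every vertex outside $D$ has at least one neighbour in $D$. Order = number of vertices. *)

theory Defs
  imports Complex_Main
begin

definition simple_graph :: "'a set \<Rightarrow> 'a set set \<Rightarrow> bool" where
  "simple_graph V E \<longleftrightarrow> finite V \<and>
     (\<forall>e\<in>E. \<exists>u v. e = {u, v} \<and> u \<noteq> v \<and> u \<in> V \<and> v \<in> V)"

definition adj :: "'a set set \<Rightarrow> 'a \<Rightarrow> 'a \<Rightarrow> bool" where
  "adj E u v \<longleftrightarrow> {u, v} \<in> E"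

definition is_cycle :: "'a set set \<Rightarrow> 'a list \<Rightarrow> bool" where
  "is_cycle E cs \<longleftrightarrow> length cs \<ge> 3 \<and> distinct cs \<and>
     (\<forall>i < length cs - 1. adj E (cs ! i) (cs ! Suc i)) \<and>
     adj E (last cs) (hd cs)"

definition forest :: "'a set \<Rightarrow> 'a set set \<Rightarrow> bool" where
  "forest V E \<longleftrightarrow> simple_graph V E \<and> \<not> (\<exists>cs. is_cycle E cs)"

definition connected_graph :: "'a set \<Rightarrow> 'a set set \<Rightarrow> bool" where
  "connected_graph V E \<longleftrightarrow>
     (\<forall>u\<in>V. \<forall>v\<in>V. (u, v) \<in> {(x, y). adj E x y}\<^sup>*)"

definition tree :: "'a set \<Rightarrow> 'a set set \<Rightarrow> bool" where
  "tree V E \<longleftrightarrow> forest V E \<and> connected_graph V E \<and> V \<noteq> {}"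

definition indep_dom_set :: "'a set \<Rightarrow> 'a set set \<Rightarrow> 'a set \<Rightarrow> bool" where
  "indep_dom_set V E D \<longleftrightarrow> D \<subseteq> V \<and>
     (\<forall>u\<in>D. \<forall>v\<in>D. \<not> adj E u v) \<and>
     (\<forall>v\<in>V - D. \<exists>u\<in>D. adj E v u)"

definition num_ids :: "'a set \<Rightarrow> 'a set set \<Rightarrow> nat" where
  "num_ids V E = card {D. indep_dom_set V E D}"

end

theory Submission
  imports Defs
begin


lemma adj_sym: "adj E u v = adj E v u" by (simp add: adj_def insert_commute)

lemma sg_adj: "simple_graph V E \<Longrightarrow> adj E u v \<Longrightarrow> u \<in> V \<and> v \<in> V \<and> u \<noteq> v"
proof -
  assume sg: "simple_graph V E" and a: "adj E u v"
  then have "{u,v} \<in> E" unfolding adj_def by simp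
  then obtain a b where ab: "{u,v} = {a,b}" "a \<noteq> b" "a \<in> V" "b \<in> V"
    using sg unfolding simple_graph_def by blast
  have "u \<in> {a,b}" "v \<in> {a,b}" using ab(1) by blast+
  then have "u \<in> V" "v \<in> V" using ab by blast+
  moreover have "u \<noteq> v"
  proof
    assume "u = v"
    then have "{a,b} = {u}" using ab(1) by simp
    then show False using ab(2) by blast
  qed
  ultimately show ?thesis by blast
qed

lemma cycle_mono: "is_cycle E' cs \<Longrightarrow> E' \<subseteq> E \<Longrightarrow> is_cycle E cs"
  unfolding is_cycle_def adj_def by blast

lemma forest_del: "forest V E \<Longrightarrow> forest (V - S) {e\<in>E. e \<inter> S = {}}"
  unfolding forest_def
proof (intro conjI)
  assume a: "simple_graph V E \<and> \<not> (\<exists>cs. is_cycle E cs)"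
  then have sg: "simple_graph V E" by simp
  show "simple_graph (V - S) {e\<in>E. e \<inter> S = {}}"
    unfolding simple_graph_def
  proof (intro conjI ballI)
    show "finite (V - S)" using sg unfolding simple_graph_def by simp
    fix e assume e: "e \<in> {e \<in> E. e \<inter> S = {}}"
    then obtain u v where uv: "e = {u, v}" "u \<noteq> v" "u \<in> V" "v \<in> V"
      using sg unfolding simple_graph_def by blast
    have "u \<notin> S" "v \<notin> S" using e uv(1) by auto
    then show "\<exists>u v. e = {u, v} \<and> u \<noteq> v \<and> u \<in> V - S \<and> v \<in> V - S"
      using uv by blast
  qed
  show "\<not> (\<exists>cs. is_cycle {e\<in>E. e \<inter> S = {}} cs)" using a cycle_mono
    by (metis (no_types, lifting) mem_Collect_eq subsetI)
qed

definition nbh :: "'a set set \<Rightarrow> 'a \<Rightarrow> 'a set" where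
  "nbh E x = insert x {y. adj E x y}"

lemma ids_del:
  assumes "indep_dom_set V E D" "x \<in> D"
  shows "indep_dom_set (V - nbh E x) {e\<in>E. e \<inter> nbh E x = {}} (D - {x})"
  unfolding indep_dom_set_def
proof (intro conjI ballI)
  have i: "\<forall>u\<in>D. \<forall>v\<in>D. \<not> adj E u v" and s: "D \<subseteq> V"
    and d: "\<forall>v\<in>V - D. \<exists>u\<in>D. adj E v u" using assms(1) unfolding indep_dom_set_def by auto
  show "D - {x} \<subseteq> V - nbh E x" using i s assms(2) unfolding nbh_def by auto
  fix u v assume "u \<in> D - {x}" "v \<in> D - {x}"
  then show "\<not> adj {e \<in> E. e \<inter> nbh E x = {}} u v" using i unfolding adj_def by auto
next
  have i: "\<forall>u\<in>D. \<forall>v\<in>D. \<not> adj E u v" and s: "D \<subseteq> V"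
    and d: "\<forall>v\<in>V - D. \<exists>u\<in>D. adj E v u" using assms(1) unfolding indep_dom_set_def by auto
  fix w assume w: "w \<in> V - nbh E x - (D - {x})"
  then have "w \<in> V - D" unfolding nbh_def by auto
  then obtain u where u: "u \<in> D" "adj E w u" using d by blast
  have wx: "\<not> adj E x w" "w \<noteq> x" using w unfolding nbh_def by auto
  have ux: "u \<noteq> x" using u wx adj_sym by metis
  have "\<not> adj E x u" using i u assms(2) by blast
  then have "u \<notin> nbh E x" using ux unfolding nbh_def by auto
  moreover have "w \<notin> nbh E x" using w by auto
  ultimately have "{w, u} \<inter> nbh E x = {}" by auto
  then show "\<exists>u\<in>D - {x}. adj {e \<in> E. e \<inter> nbh E x = {}} w u"
    using u ux unfolding adj_def by auto
qed

lemma finite_ids: "finite V \<Longrightarrow> finite {D. indep_dom_set V E D}"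
  by (rule finite_subset[of _ "Pow V"]) (auto simp: indep_dom_set_def)

lemma card_with:
  assumes "finite V"
  shows "card {D. indep_dom_set V E D \<and> x \<in> D}
     \<le> num_ids (V - nbh E x) {e\<in>E. e \<inter> nbh E x = {}}"
  unfolding num_ids_def
proof (rule card_inj_on_le[where f = "\<lambda>D. D - {x}"])
  show "inj_on (\<lambda>D. D - {x}) {D. indep_dom_set V E D \<and> x \<in> D}"
    by (rule inj_onI) (metis CollectD insert_Diff)
  show "(\<lambda>D. D - {x}) ` {D. indep_dom_set V E D \<and> x \<in> D}
    \<subseteq> {D. indep_dom_set (V - nbh E x) {e \<in> E. e \<inter> nbh E x = {}} D}"
    by (rule image_subsetI) (simp add: ids_del)
  show "finite {D. indep_dom_set (V - nbh E x) {e \<in> E. e \<inter> nbh E x = {}} D}"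
    by (rule finite_ids) (use assms in simp)
qed

definition ispath :: "'a set set \<Rightarrow> 'a list \<Rightarrow> bool" where
  "ispath E p \<longleftrightarrow> distinct p \<and> (\<forall>i < length p - 1. adj E (p!i) (p!Suc i))"

lemma leaf:
  assumes "forest V E" "E \<noteq> {}"
  shows "\<exists>v u. adj E v u \<and> (\<forall>w. adj E v w \<longrightarrow> w = u)"
proof -
  have sg: "simple_graph V E" and nc: "\<And>cs. \<not> is_cycle E cs"
    using assms(1) unfolding forest_def by auto
  obtain e where e: "e \<in> E" using assms(2) by blast
  then have "\<exists>u v. e = {u,v} \<and> u \<noteq> v \<and> u \<in> V \<and> v \<in> V"
    using sg unfolding simple_graph_def by simp
  then obtain a b where ab0: "e = {a,b}" "a \<noteq> b" "a \<in> V" "b \<in> V" by blast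
  then have ab: "{a,b} \<in> E" "a \<noteq> b" "a \<in> V" "b \<in> V" using e by auto
  define P where "P = (\<lambda>p. ispath E p \<and> set p \<subseteq> V \<and> length p \<ge> 2)"
  have Pab: "P [a,b]" using ab unfolding P_def ispath_def adj_def by auto
  have bd: "\<forall>q. P q \<longrightarrow> length q < card V + 1"
  proof (intro allI impI)
    fix q assume "P q"
    then have "distinct q" "set q \<subseteq> V" unfolding P_def ispath_def by auto
    then show "length q < card V + 1"
    proof -
      have "card (set q) \<le> card V"
        using card_mono sg \<open>set q \<subseteq> V\<close> unfolding simple_graph_def by blast
      then show ?thesis using distinct_card[OF \<open>distinct q\<close>] by simp
    qed
  qed
  obtain p where Pp: "P p" and mx: "\<forall>q. P q \<longrightarrow> length q \<le> length p"
    using Lattices_Big.ex_has_greatest_nat[OF Pab bd] by blast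
  have dp: "distinct p" and ap: "\<forall>i < length p - 1. adj E (p!i) (p!Suc i)"
    and sp: "set p \<subseteq> V" and lp: "length p \<ge> 2" using Pp unfolding P_def ispath_def by auto
  have a01: "adj E (p!0) (p!1)" using ap lp by auto
  have "\<forall>w. adj E (p!0) w \<longrightarrow> w = p!1"
  proof (intro allI impI)
    fix w assume aw: "adj E (p!0) w"
    then have wV: "w \<in> V" and w0: "w \<noteq> p!0" using sg_adj[OF sg] by auto
    show "w = p!1"
    proof (cases "w \<in> set p")
      case False
      have "P (w # p)" unfolding P_def ispath_def
      proof (intro conjI allI impI)
        show "distinct (w # p)" using False dp by auto
        show "set (w # p) \<subseteq> V" using wV sp by auto
        show "2 \<le> length (w # p)" using lp by auto
        fix i assume i: "i < length (w # p) - 1"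
        show "adj E ((w # p) ! i) ((w # p) ! Suc i)"
        proof (cases i)
          case 0
          have "adj E w (p!0)" using aw adj_sym by metis
          then show ?thesis using 0 by simp
        next
          case (Suc j) then show ?thesis using ap i by auto
        qed
      qed
      then show ?thesis using mx by fastforce
    next
      case True
      then obtain j where j: "j < length p" "p ! j = w" by (auto simp: in_set_conv_nth)
      have "j \<noteq> 0"
      proof
        assume "j = 0" then show False using j w0 by simp
      qed
      moreover have "\<not> j \<ge> 2"
      proof
        assume j2: "j \<ge> 2"
        have "is_cycle E (take (Suc j) p)" unfolding is_cycle_def
        proof (intro conjI allI impI)
          show "3 \<le> length (take (Suc j) p)" using j j2 by auto
          show "distinct (take (Suc j) p)" using dp by auto
          fix i assume "i < length (take (Suc j) p) - 1"
          then show "adj E (take (Suc j) p ! i) (take (Suc j) p ! Suc i)"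
            using ap j by auto
        next
          have tne: "take (Suc j) p \<noteq> []" using j by (cases p) auto
          have ltk: "length (take (Suc j) p) = Suc j" using j by simp
          have "last (take (Suc j) p) = take (Suc j) p ! j"
            using last_conv_nth[OF tne] ltk by simp
          then have "last (take (Suc j) p) = p ! j" by simp
          moreover have "hd (take (Suc j) p) = take (Suc j) p ! 0"
            using hd_conv_nth[OF tne] .
          then have "hd (take (Suc j) p) = p ! 0" by simp
          ultimately show "adj E (last (take (Suc j) p)) (hd (take (Suc j) p))"
            using aw j adj_sym by metis
        qed
        then show False using nc by blast
      qed
      ultimately show ?thesis using j by (metis One_nat_def less_2_cases not_less)
    qed
  qed
  then show ?thesis using a01 by blast
qed

lemma forest_bound:
  "forest V E \<Longrightarrow> real (num_ids V E) \<le> 2 powr (real (card V) / 2)"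
proof (induction "card V" arbitrary: V E rule: less_induct)
  case less
  have sg: "simple_graph V E" using less.prems unfolding forest_def by auto
  have fin: "finite V" using sg unfolding simple_graph_def by auto
  show ?case
  proof (cases "E = {}")
    case True
    have "{D. indep_dom_set V E D} = {V}"
      using True unfolding indep_dom_set_def adj_def by auto
    then have "num_ids V E = 1" unfolding num_ids_def by auto
    then show ?thesis by (simp add: ge_one_powr_ge_zero)
  next
    case False
    obtain v u where vu: "adj E v u" "\<forall>w. adj E v w \<longrightarrow> w = u"
      using leaf[OF less.prems False] by blast
    have uV: "u \<in> V" "v \<in> V" "u \<noteq> v" using sg_adj[OF sg vu(1)] by auto
    have uv: "adj E u v" using vu adj_sym by metis
    have cover: "{D. indep_dom_set V E D} \<subseteq>
       {D. indep_dom_set V E D \<and> v \<in> D} \<union> {D. indep_dom_set V E D \<and> u \<in> D}"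
    proof
      fix D assume "D \<in> {D. indep_dom_set V E D}"
      then have D: "indep_dom_set V E D" by auto
      show "D \<in> {D. indep_dom_set V E D \<and> v \<in> D} \<union> {D. indep_dom_set V E D \<and> u \<in> D}"
      proof (cases "v \<in> D")
        case False
        then obtain w where "w \<in> D" "adj E v w" using D uV unfolding indep_dom_set_def by blast
        then show ?thesis using vu D by auto
      qed (use D in auto)
    qed
    have bnd: "real (card {D. indep_dom_set V E D \<and> x \<in> D}) \<le> 2 powr ((real (card V) - 2) / 2)"
      if x: "x \<in> {u, v}" for x
    proof -
      have nsub: "nbh E x \<subseteq> V" using sg_adj[OF sg] uV x unfolding nbh_def by auto
      have "{u, v} \<subseteq> nbh E x" using x uv vu(1) unfolding nbh_def by blast
      have fN: "finite (nbh E x)" using nsub fin finite_subset by blast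
      have "card {u, v} \<le> card (nbh E x)" by (rule card_mono[OF fN]) fact
      then have c2: "card (nbh E x) \<ge> 2" using uV(3) by simp
      have cNV: "card (nbh E x) \<le> card V" using card_mono[OF fin nsub] .
      have cV: "card (V - nbh E x) = card V - card (nbh E x)"
        using card_Diff_subset[OF fN nsub] .
      have lt: "card (V - nbh E x) < card V" using cV c2 cNV by linarith
      have ih: "real (num_ids (V - nbh E x) {e\<in>E. e \<inter> nbh E x = {}})
          \<le> 2 powr (real (card (V - nbh E x)) / 2)"
        using less.hyps[OF lt forest_del[OF less.prems]] .
      have "real (card (V - nbh E x)) \<le> real (card V) - 2" using cV c2 cNV
        by (simp add: of_nat_diff)
      then have "2 powr (real (card (V - nbh E x)) / 2) \<le> 2 powr ((real (card V) - 2) / 2)"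
        by (intro powr_mono) auto
      then show ?thesis using ih card_with[OF fin, of E x] by linarith
    qed
    have "num_ids V E \<le> card {D. indep_dom_set V E D \<and> v \<in> D} + card {D. indep_dom_set V E D \<and> u \<in> D}"
      unfolding num_ids_def
      by (rule le_trans[OF card_mono[OF _ cover] card_Un_le]) (use fin finite_ids in auto)
    then have "real (num_ids V E) \<le> 2 * 2 powr ((real (card V) - 2) / 2)"
    proof -
      have b1: "real (card {D. indep_dom_set V E D \<and> u \<in> D}) \<le> 2 powr ((real (card V) - 2) / 2)"
        using bnd[of u] by simp
      have b2: "real (card {D. indep_dom_set V E D \<and> v \<in> D}) \<le> 2 powr ((real (card V) - 2) / 2)"
        using bnd[of v] by simp
      from \<open>num_ids V E \<le> _\<close> have "real (num_ids V E) \<le> real (card {D. indep_dom_set V E D \<and> v \<in> D}) + real (card {D. indep_dom_set V E D \<and> u \<in> D})"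
        by (metis of_nat_add of_nat_le_iff)
      then show ?thesis using b1 b2 by linarith
    qed
    also have "\<dots> = 2 powr (real (card V) / 2)"
    proof -
      have "2 * 2 powr ((real (card V) - 2) / 2) = 2 powr (1 + (real (card V) - 2) / 2)"
        by (simp add: powr_add)
      also have "1 + (real (card V) - 2) / 2 = real (card V) / 2" by (simp add: field_simps)
      finally show ?thesis .
    qed
    finally show ?thesis .
  qed
qed



lemma cycle_nbrs:
  assumes "is_cycle E cs" "x \<in> set cs"
  shows "\<exists>y z. y \<noteq> z \<and> y \<in> set cs \<and> z \<in> set cs \<and> adj E x y \<and> adj E x z"
proof -
  have l: "length cs \<ge> 3" and d: "distinct cs"
    and a: "\<forall>i < length cs - 1. adj E (cs ! i) (cs ! Suc i)"
    and la: "adj E (last cs) (hd cs)" using assms(1) unfolding is_cycle_def by auto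
  obtain i where i: "i < length cs" "cs ! i = x" using assms(2) by (auto simp: in_set_conv_nth)
  have ne: "cs \<noteq> []" using l by auto
  have hd: "hd cs = cs ! 0" using ne by (simp add: hd_conv_nth)
  have lst: "last cs = cs ! (length cs - 1)" using ne by (simp add: last_conv_nth)
  define n where "n = length cs"
  have nth_eq: "\<And>j k. j < n \<Longrightarrow> k < n \<Longrightarrow> cs ! j = cs ! k \<longleftrightarrow> j = k"
    using d unfolding n_def by (simp add: nth_eq_iff_index_eq)
  consider "i = 0" | "i = n - 1" | "0 < i \<and> i < n - 1" using i l unfolding n_def by linarith
  then show ?thesis
  proof cases
    case 1
    have "adj E x (cs ! 1)" using a 1 i l by auto
    moreover have "adj E x (cs ! (n - 1))" using la 1 i hd lst adj_sym unfolding n_def by metis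
    moreover have "cs ! 1 \<noteq> cs ! (n - 1)"
    proof -
      have "1 < length cs" "n - 1 < length cs" "1 \<noteq> n - 1" using l unfolding n_def by auto
      then show ?thesis using nth_eq_iff_index_eq[OF d] by metis
    qed
    moreover have "cs ! 1 \<in> set cs" "cs ! (n - 1) \<in> set cs" using l unfolding n_def by (auto intro!: nth_mem)
    ultimately show ?thesis by blast
  next
    case 2
    have a2: "adj E (cs ! (n - 2)) (cs ! Suc (n - 2))" using a l unfolding n_def by auto
    have "Suc (n - 2) = n - 1" using l unfolding n_def by auto
    then have "adj E x (cs ! (n - 2))" using a2 2 i adj_sym by metis
    moreover have "adj E x (cs ! 0)" using la 2 i hd lst unfolding n_def by metis
    moreover have "cs ! 0 \<noteq> cs ! (n - 2)"
    proof -
      have "0 < length cs" "n - 2 < length cs" "0 \<noteq> n - 2" using l unfolding n_def by auto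
      then show ?thesis using nth_eq_iff_index_eq[OF d] by metis
    qed
    moreover have "cs ! 0 \<in> set cs" "cs ! (n - 2) \<in> set cs" using l unfolding n_def by (auto intro!: nth_mem)
    ultimately show ?thesis by blast
  next
    case 3
    have "adj E x (cs ! Suc i)" using a 3 i unfolding n_def by auto
    moreover have "adj E x (cs ! (i - 1))"
    proof -
      have "i - 1 < length cs - 1" using 3 unfolding n_def by auto
      then have "adj E (cs ! (i - 1)) (cs ! Suc (i - 1))" using a by blast
      moreover have "Suc (i - 1) = i" using 3 by auto
      ultimately show ?thesis using i adj_sym by metis
    qed
    moreover have "cs ! Suc i \<noteq> cs ! (i - 1)"
    proof -
      have "Suc i < length cs" "i - 1 < length cs" "Suc i \<noteq> i - 1" using 3 unfolding n_def by auto
      then show ?thesis using nth_eq_iff_index_eq[OF d] by metis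
    qed
    moreover have "cs ! Suc i \<in> set cs" "cs ! (i - 1) \<in> set cs" using 3 unfolding n_def by (auto intro!: nth_mem)
    ultimately show ?thesis by blast
  qed
qed

definition RR :: "nat \<Rightarrow> nat \<Rightarrow> nat \<Rightarrow> bool" where
  "RR k x y \<longleftrightarrow> (x = 0 \<and> y = 1) \<or> (x = 0 \<and> even y \<and> 2 \<le> y \<and> y < 2*k+2)
     \<or> (odd y \<and> 3 \<le> y \<and> y < 2*k+2 \<and> x = y - 1)"

definition EE :: "nat \<Rightarrow> nat set set" where
  "EE k = {{x, y} | x y. RR k x y}"

lemma adjEE: "adj (EE k) a b \<longleftrightarrow> RR k a b \<or> RR k b a"
  unfolding adj_def EE_def by (auto simp: doubleton_eq_iff)

lemma dbl: "(a::nat) \<noteq> b \<Longrightarrow> a < n \<Longrightarrow> b < n \<Longrightarrow> \<exists>u v. {a,b}={u,v} \<and> u\<noteq>v \<and> u<n \<and> v<n"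
  by blast

lemma sgEE: "simple_graph {0..<2*k+2} (EE k)"
  unfolding simple_graph_def EE_def RR_def by (auto intro!: dbl)

lemma nb_odd: "odd x \<Longrightarrow> adj (EE k) x y \<Longrightarrow> y = x - 1"
  unfolding adjEE RR_def by (elim disjE conjE) presburger+

lemma nb_even: "even x \<Longrightarrow> x \<noteq> 0 \<Longrightarrow> adj (EE k) x y \<Longrightarrow> y = 0 \<or> y = x + 1"
  unfolding adjEE RR_def by (elim disjE conjE) presburger+

lemma nb_zero: "adj (EE k) 0 y \<Longrightarrow> y \<noteq> 0"
  unfolding adjEE RR_def by auto

lemma nocycEE: "\<not> is_cycle (EE k) cs"
proof
  assume c: "is_cycle (EE k) cs"
  have odd: "x \<notin> set cs" if "odd x" for x
  proof
    assume "x \<in> set cs"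
    then obtain y z where "y \<noteq> z" "adj (EE k) x y" "adj (EE k) x z"
      using cycle_nbrs[OF c] by blast
    then show False using nb_odd[OF that] by metis
  qed
  have even: "x \<notin> set cs" if "even x" "x \<noteq> 0" for x
  proof
    assume "x \<in> set cs"
    then obtain y z where "y \<noteq> z" "adj (EE k) x y" "adj (EE k) x z" "y \<in> set cs" "z \<in> set cs"
      using cycle_nbrs[OF c] by blast
    moreover have "odd (x + 1)" using that by simp
    ultimately show False using nb_even[OF that] odd by metis
  qed
  have zero: "0 \<notin> set cs"
  proof
    assume "0 \<in> set cs"
    then obtain y where "adj (EE k) 0 y" "y \<in> set cs"
      using cycle_nbrs[OF c] by blast
    then show False using odd even nb_zero by blast
  qed
  have "set cs = {}" using odd even zero by (metis equals0I)
  then show False using c unfolding is_cycle_def by auto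
qed

lemma connEE: "connected_graph {0..<2*k+2} (EE k)"
proof -
  let ?R = "{(x, y). adj (EE k) x y}"
  have to0: "(x, 0) \<in> ?R\<^sup>* \<and> (0, x) \<in> ?R\<^sup>*" if "x < 2*k+2" for x
  proof (cases "x = 0")
    case False
    show ?thesis
    proof (cases "even x \<or> x = 1")
      case True
      then have "x = 1 \<or> (even x \<and> 2 \<le> x)" using False by presburger
      then have "RR k 0 x" using that unfolding RR_def by auto
      then have "(x, 0) \<in> ?R" "(0, x) \<in> ?R" unfolding adjEE by auto
      then show ?thesis by auto
    next
      case F: False
      have x3: "3 \<le> x" "odd x" using F False by presburger+
      then have a1: "adj (EE k) x (x - 1)" "adj (EE k) (x - 1) x" using that
        unfolding adjEE RR_def by auto
      have e1: "even (x - 1)" "2 \<le> x - 1" using x3 by presburger+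
      have a2: "adj (EE k) (x - 1) 0" "adj (EE k) 0 (x - 1)" using that e1
        unfolding adjEE RR_def by auto
      have r: "(x, x - 1) \<in> ?R" "(x - 1, x) \<in> ?R" "(x - 1, 0) \<in> ?R" "(0, x - 1) \<in> ?R"
        using a1 a2 by auto
      have "(x, 0) \<in> ?R\<^sup>*" using r(1,3) by (meson r_into_rtrancl rtrancl_trans)
      moreover have "(0, x) \<in> ?R\<^sup>*" using r(2,4) by (meson r_into_rtrancl rtrancl_trans)
      ultimately show ?thesis by auto
    qed
  qed auto
  show ?thesis unfolding connected_graph_def
    using to0 by (meson atLeastLessThan_iff rtrancl_trans)
qed

lemma treeEE: "tree {0..<2*k+2} (EE k)"
  unfolding tree_def forest_def using sgEE nocycEE connEE by auto

definition DD :: "nat \<Rightarrow> nat set \<Rightarrow> nat set" where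
  "DD k S = insert 1 ((\<lambda>i. 2*i+2) ` S \<union> (\<lambda>i. 2*i+3) ` ({..<k} - S))"

lemma par1: "(2*i+2::nat) \<noteq> 2*j+3" by presburger

lemma DD_mem: "z \<in> DD k S \<longleftrightarrow> z = 1 \<or> (\<exists>i\<in>S. z = 2*i+2) \<or> (\<exists>i<k. i \<notin> S \<and> z = 2*i+3)"
  unfolding DD_def by auto

lemma DD_even: "2*i+2 \<in> DD k S \<longleftrightarrow> i \<in> S"
  unfolding DD_mem using par1 by auto

lemma DD_odd: "2*i+3 \<in> DD k S \<longleftrightarrow> i < k \<and> i \<notin> S"
  unfolding DD_mem using par1 by (auto simp: eq_commute)

lemma DD_indep: assumes "u \<in> DD k S" "v \<in> DD k S" shows "\<not> RR k u v"
proof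
  assume r: "RR k u v"
  have "u \<noteq> 0" using assms(1) unfolding DD_mem by auto
  then have v: "odd v" "3 \<le> v" "u = v - 1" using r unfolding RR_def by auto
  have "v \<noteq> 1" using v by auto
  moreover have "\<not> (\<exists>i. v = 2*i+2)" using v(1) by presburger
  ultimately obtain i where i: "i < k" "i \<notin> S" "v = 2*i+3" using assms(2) unfolding DD_mem by blast
  then have "u = 2*i+2" using v by simp
  then show False using assms(1) i DD_even by blast
qed

lemma idsDD:
  assumes "S \<subseteq> {..<k}"
  shows "indep_dom_set {0..<2*k+2} (EE k) (DD k S)"
  unfolding indep_dom_set_def
proof (intro conjI ballI)
  show "DD k S \<subseteq> {0..<2 * k + 2}" using assms unfolding DD_def by auto
  fix u v assume u: "u \<in> DD k S" and v: "v \<in> DD k S"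
  show "\<not> adj (EE k) u v"
  proof
    assume "adj (EE k) u v"
    then have "RR k u v \<or> RR k v u" by (simp add: adjEE)
    then show False using u v DD_indep by blast
  qed
next
  fix w assume w: "w \<in> {0..<2 * k + 2} - DD k S"
  show "\<exists>u\<in>DD k S. adj (EE k) w u"
  proof (cases "w = 0")
    case True
    then show ?thesis unfolding DD_def adjEE RR_def by auto
  next
    case False
    have "w \<noteq> 1" using w unfolding DD_def by auto
    show ?thesis
    proof (cases "even w")
      case True
      have "w = 2*(w div 2 - 1)+2" using True False by presburger
      then obtain i where i: "w = 2*i+2" by blast
      have ik: "i < k" using w i by auto
      have "i \<notin> S" using w i unfolding DD_def by auto
      then have "2*i+3 \<in> DD k S" using ik unfolding DD_def by auto
      moreover have "adj (EE k) w (2*i+3)" using i ik unfolding adjEE RR_def by auto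
      ultimately show ?thesis by blast
    next
      case odd: False
      have "w = 2*((w - 3) div 2)+3" using odd \<open>w \<noteq> 1\<close> False by presburger
      then obtain i where i: "w = 2*i+3" by blast
      have ik: "i < k" using w i by auto
      have "i \<in> S" using w i ik unfolding DD_def by auto
      then have "2*i+2 \<in> DD k S" unfolding DD_def by auto
      moreover have "adj (EE k) w (2*i+2)" using i ik unfolding adjEE RR_def by auto
      ultimately show ?thesis by blast
    qed
  qed
qed

lemma countEE: "num_ids {0..<2*k+2} (EE k) \<ge> 2 ^ k"
proof -
  have inj: "inj_on (DD k) (Pow {..<k})"
  proof (rule inj_onI)
    fix S T assume S: "S \<in> Pow {..<k}" and T: "T \<in> Pow {..<k}" and e: "DD k S = DD k T"
    have "\<And>i. i \<in> S \<longleftrightarrow> 2*i+2 \<in> DD k S" using DD_even by blast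
    moreover have "\<And>i. i \<in> T \<longleftrightarrow> 2*i+2 \<in> DD k T" using DD_even by blast
    ultimately show "S = T" using e by blast
  qed
  have "card (DD k ` Pow {..<k}) = 2 ^ k" using card_image[OF inj] by (simp add: card_Pow)
  moreover have "card (DD k ` Pow {..<k}) \<le> num_ids {0..<2*k+2} (EE k)"
    unfolding num_ids_def
  proof (rule card_mono)
    show "finite {D. indep_dom_set {0..<2 * k + 2} (EE k) D}" by (rule finite_ids) simp
    show "DD k ` Pow {..<k} \<subseteq> {D. indep_dom_set {0..<2 * k + 2} (EE k) D}"
      using idsDD by blast
  qed
  ultimately show ?thesis by simp
qed

lemma part2: "\<forall>N :: nat. \<exists>(V :: nat set) E. tree V E \<and> card V \<ge> N \<and>
            real (num_ids V E) \<ge> (1/2) * 2 powr (real (card V) / 2)"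
proof
  fix N
  have c: "card {0..<2*N+2} = 2*N+2" by simp
  have "real (2*N+2) / 2 = real (N+1)" by simp
  then have "2 powr (real (2*N+2) / 2) = 2 powr real (N+1)" by (rule arg_cong)
  also have "\<dots> = 2 ^ (N+1)" by (rule powr_realpow) simp
  finally have "2 powr (real (2*N+2) / 2) = 2 ^ (N+1)" .
  then have "(1/2) * 2 powr (real (card {0..<2*N+2}) / 2) = 2 ^ N" using c by simp
  moreover have "real (num_ids {0..<2*N+2} (EE N)) \<ge> 2 ^ N" using countEE[of N]
    by (metis of_nat_le_iff of_nat_numeral of_nat_power)
  ultimately show "\<exists>(V :: nat set) E. tree V E \<and> card V \<ge> N \<and>
            real (num_ids V E) \<ge> (1/2) * 2 powr (real (card V) / 2)"
    using treeEE[of N] c by (metis le_add1 le_add2 add_leD1 mult_2)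
qed


theorem mainTheorem17:
  shows "(\<forall>(V :: 'a set) E. forest V E \<longrightarrow>
            real (num_ids V E) \<le> 2 powr (real (card V) / 2))
       \<and> (\<forall>N :: nat. \<exists>(V :: nat set) E. tree V E \<and> card V \<ge> N \<and>
            real (num_ids V E) \<ge> (1/2) * 2 powr (real (card V) / 2))"
proof (intro conjI)
  show "\<forall>(V :: 'a set) E. forest V E \<longrightarrow>
            real (num_ids V E) \<le> 2 powr (real (card V) / 2)"
    using forest_bound by blast
  show "\<forall>N :: nat. \<exists>(V :: nat set) E. tree V E \<and> card V \<ge> N \<and>
            real (num_ids V E) \<ge> (1/2) * 2 powr (real (card V) / 2)"
    by (rule part2)
qed

end
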